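(* Let $q\ge 4$ be even and $n\ge 3$ be odd. There does not exist an ordering $G(0),G(1),\ldots,G(q^n-1)$ of all of $\mathbb{Z}_q^n$ (indices taken modulo $q^n$) such that consecutive words $G(i),G(i+1)$ are at Lee distance $1$, and such that for every $i$ there is $\epsilon_i\in\{1,-1\}$ with $G(i)+(1,1,\ldots,1)=G(i+q^{n-1}+\epsilon_i)$.
   Context: The Lee distance between $v=(v_1,\ldots,v_n)$ and $u=(u_1,\ldots,u_n)$ in $\mathbb{Z}_q^n$ is $\sum_{i=1}^n \min\{|v_i-u_i|,\,q-|v_i-u_i|\}$, where $v_i,u_i$ are regarded as integers in $\{0,\ldots,q-1\}$. Addition of words is componentwise in $\mathbb{Z}_q$. *)

theory Defs
  imports Main
begin

definition words :: "nat \<Rightarrow> nat \<Rightarrow> nat list set" where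
  "words q n = {w. length w = n \<and> (\<forall>x\<in>set w. x < q)}"

definition lee_dist :: "nat \<Rightarrow> nat list \<Rightarrow> nat list \<Rightarrow> nat" where
  "lee_dist q v u = (\<Sum>i<length v.
      min (nat \<bar>int (v!i) - int (u!i)\<bar>) (q - nat \<bar>int (v!i) - int (u!i)\<bar>))"

definition word_add :: "nat \<Rightarrow> nat list \<Rightarrow> nat list \<Rightarrow> nat list" where
  "word_add q v u = map2 (\<lambda>a b. (a + b) mod q) v u"

definition all_ones :: "nat \<Rightarrow> nat list" where
  "all_ones n = replicate n 1"

end

theory Submission
  imports Defs
begin

definition stp :: "nat \<Rightarrow> nat list \<Rightarrow> nat \<Rightarrow> nat \<Rightarrow> nat list" where
  "stp q w k s = w[k := (w!k + s) mod q]"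

definition sg :: "nat \<Rightarrow> int" where "sg s = (if s = 1 then 1 else -1)"

lemma words_len: "w \<in> words q n \<Longrightarrow> length w = n"
  by (simp add: words_def)

lemma words_nth: "w \<in> words q n \<Longrightarrow> k < n \<Longrightarrow> w!k < q"
  by (simp add: words_def)

lemma wordsI: "length w = n \<Longrightarrow> (\<And>k. k < n \<Longrightarrow> w!k < q) \<Longrightarrow> w \<in> words q n"
  by (auto simp: words_def in_set_conv_nth)

lemma add1_len: "w \<in> words q n \<Longrightarrow> length (word_add q w (all_ones n)) = n"
  by (simp add: word_add_def all_ones_def words_def)

lemma add1_nth: "w \<in> words q n \<Longrightarrow> k < n \<Longrightarrow> word_add q w (all_ones n) ! k = (w!k + 1) mod q"
  by (simp add: word_add_def all_ones_def words_def)

lemma add1_words: "q > 0 \<Longrightarrow> w \<in> words q n \<Longrightarrow> word_add q w (all_ones n) \<in> words q n"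
  by (rule wordsI) (simp_all add: add1_len add1_nth)

lemma add1_inj: "v \<in> words q n \<Longrightarrow> u \<in> words q n \<Longrightarrow> word_add q v (all_ones n) = word_add q u (all_ones n) \<Longrightarrow> v = u"
proof (rule nth_equalityI)
  assume v: "v \<in> words q n" and u: "u \<in> words q n" and e: "word_add q v (all_ones n) = word_add q u (all_ones n)"
  show "length v = length u" using v u by (simp add: words_len)
  fix k assume "k < length v"
  hence k: "k < n" using v by (simp add: words_len)
  have "(v!k + 1) mod q = (u!k + 1) mod q" using e add1_nth[OF v k] add1_nth[OF u k] by metis
  moreover have "v!k < q" "u!k < q" using v u k words_nth by auto
  ultimately show "v!k = u!k"
    by (cases "v!k + 1 = q"; cases "u!k + 1 = q") auto
qed

lemma stp_len: "length (stp q w k s) = length w" by (simp add: stp_def)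

lemma stp_nth: "k < length w \<Longrightarrow> stp q w a s ! k = (if k = a then (w!k + s) mod q else w!k)"
  by (simp add: stp_def)

lemma stp_words: "q > 0 \<Longrightarrow> w \<in> words q n \<Longrightarrow> stp q w a s \<in> words q n"
  by (rule wordsI) (auto simp: stp_len stp_nth words_len words_nth)

lemma add1_stp: "q > 0 \<Longrightarrow> w \<in> words q n \<Longrightarrow> a < n \<Longrightarrow>
   word_add q (stp q w a s) (all_ones n) = stp q (word_add q w (all_ones n)) a s"
proof -
  assume q: "q > 0" and w: "w \<in> words q n" and a: "a < n"
  have sw: "stp q w a s \<in> words q n" using stp_words[OF q w] .
  have aw: "word_add q w (all_ones n) \<in> words q n" using add1_words[OF q w] .
  show ?thesis
  proof (rule nth_equalityI)
    show "length (word_add q (stp q w a s) (all_ones n)) = length (stp q (word_add q w (all_ones n)) a s)"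
      using sw aw by (simp add: add1_len stp_len words_len)
    fix k assume "k < length (word_add q (stp q w a s) (all_ones n))"
    hence k: "k < n" using sw by (simp add: add1_len)
    show "word_add q (stp q w a s) (all_ones n) ! k = stp q (word_add q w (all_ones n)) a s ! k"
      using k w aw sw
      by (simp add: add1_nth stp_nth words_len add1_len mod_simps add.commute add.left_commute)
  qed
qed

lemma stp_int: "w \<in> words q n \<Longrightarrow> k < n \<Longrightarrow> s \<in> {1, q-1} \<Longrightarrow> q > 1 \<Longrightarrow>
   int (stp q w a s ! k) = (int (w!k) + (if k = a then sg s else 0)) mod int q"
proof -
  assume w: "w \<in> words q n" and k: "k < n" and s: "s \<in> {1, q-1}" and q: "q > 1"
  have x: "w!k < q" using w k words_nth by auto
  show ?thesis
  proof (cases "k = a")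
    case False thus ?thesis using w k x by (simp add: stp_nth words_len)
  next
    case True
    have "int ((w!k + s) mod q) = (int (w!k) + sg s) mod int q"
    proof (cases "s = 1")
      case True thus ?thesis by (simp add: sg_def zmod_int add.commute)
    next
      case False
      hence s': "s = q - 1" "q - 1 \<noteq> 1 \<or> True" using s by auto
      have "int ((w!k + s) mod q) = (int (w!k) + int q - 1) mod int q"
        using s' q by (simp add: zmod_int of_nat_diff)
      also have "\<dots> = (int (w!k) - 1) mod int q"
        by (metis add.commute add_diff_eq mod_add_self1)
      finally show ?thesis using False by (simp add: sg_def)
    qed
    thus ?thesis using True w k by (simp add: stp_nth words_len)
  qed
qed

lemma add1_int: "w \<in> words q n \<Longrightarrow> k < n \<Longrightarrow>
   int (word_add q w (all_ones n) ! k) = (int (w!k) + 1) mod int q"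
  by (simp add: add1_nth zmod_int add.commute)

lemma stp_par: "w \<in> words q n \<Longrightarrow> k < n \<Longrightarrow> s \<in> {1, q-1} \<Longrightarrow> even q \<Longrightarrow> q > 1 \<Longrightarrow>
   stp q w a s ! k mod 2 = (w!k + (if k = a then 1 else 0)) mod 2"
proof -
  assume w: "w \<in> words q n" and k: "k < n" and s: "s \<in> {1, q-1}" and e: "even q" and q: "q > 1"
  have so: "odd s" using s e q by auto
  have "(w!k + s) mod q mod 2 = (w!k + s) mod 2" using e by (simp add: mod_mod_cancel)
  also have "\<dots> = (w!k + 1) mod 2" using so by (metis odd_iff_mod_2_eq_one mod_add_right_eq)
  finally have "(w!k + s) mod q mod 2 = (w!k + 1) mod 2" .
  thus ?thesis using w k by (cases "k = a") (simp_all add: stp_nth words_len)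
qed

lemma add1_par: "w \<in> words q n \<Longrightarrow> k < n \<Longrightarrow> even q \<Longrightarrow>
   word_add q w (all_ones n) ! k mod 2 = (w!k + 1) mod 2"
  by (simp add: add1_nth mod_mod_cancel)

lemma term_one:
  fixes x y q :: nat
  assumes xq: "x < q" and yq: "y < q" and q3: "q \<ge> 3"
    and m: "min (nat \<bar>int x - int y\<bar>) (q - nat \<bar>int x - int y\<bar>) = 1"
  shows "y = (x + 1) mod q \<or> y = (x + (q - 1)) mod q"
proof -
  define t where "t = nat \<bar>int x - int y\<bar>"
  have tq: "t < q" using xq yq unfolding t_def by linarith
  have "t = 1 \<or> q - t = 1" using m unfolding t_def[symmetric] by (simp add: min_def split: if_splits)
  hence c: "y = x + 1 \<or> x = y + 1 \<or> (x = q - 1 \<and> y = 0) \<or> (x = 0 \<and> y = q - 1)"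
    using xq yq tq unfolding t_def by linarith
  show ?thesis
  proof (cases "y = x + 1")
    case True thus ?thesis using yq by simp
  next
    case F1: False
    show ?thesis
    proof (cases "x = y + 1")
      case True
      hence "(x + (q - 1)) mod q = (y + q) mod q" using q3 by simp
      thus ?thesis using yq by simp
    next
      case False
      hence "(x = q - 1 \<and> y = 0) \<or> (x = 0 \<and> y = q - 1)" using c F1 by blast
      thus ?thesis using q3 by auto
    qed
  qed
qed

lemma term_zero:
  fixes x y q :: nat
  assumes xq: "x < q" and yq: "y < q"
    and m: "min (nat \<bar>int x - int y\<bar>) (q - nat \<bar>int x - int y\<bar>) = 0"
  shows "x = y"
proof -
  define t where "t = nat \<bar>int x - int y\<bar>"
  have tq: "t < q" using xq yq unfolding t_def by linarith
  have "t = 0" using m tq unfolding t_def[symmetric] by (simp add: min_def split: if_splits)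
  thus ?thesis unfolding t_def by simp
qed

lemma adj:
  assumes v: "v \<in> words q n" and u: "u \<in> words q n" and q: "q \<ge> 3"
    and d: "lee_dist q v u = 1"
  shows "\<exists>k s. k < n \<and> s \<in> {1, q-1} \<and> u = stp q v k s"
proof -
  define f where "f i = min (nat \<bar>int (v!i) - int (u!i)\<bar>) (q - nat \<bar>int (v!i) - int (u!i)\<bar>)" for i
  have lv: "length v = n" "length u = n" using v u words_len by auto
  have s1: "sum f {..<n} = 1" using d lv by (simp add: lee_dist_def f_def)
  have "\<exists>i<n. f i \<noteq> 0"
  proof (rule ccontr)
    assume "\<not> ?thesis"
    hence "\<forall>i\<in>{..<n}. f i = 0" by auto
    hence "sum f {..<n} = 0" by simp
    thus False using s1 by simp
  qed
  then obtain i where i: "i < n" "f i \<noteq> 0" by blast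
  have "f i \<le> sum f {..<n}" by (rule member_le_sum) (use i in auto)
  hence fi: "f i = 1" using s1 i by simp
  have "sum f {..<n} = f i + sum f ({..<n} - {i})"
    by (rule sum.remove) (use i in auto)
  hence "sum f ({..<n} - {i}) = 0" using s1 fi by simp
  hence z: "\<forall>j\<in>{..<n} - {i}. f j = 0" by simp
  have vi: "v!i < q" "u!i < q" using v u i words_nth by auto
  have "u!i = (v!i + 1) mod q \<or> u!i = (v!i + (q - 1)) mod q"
    by (rule term_one[OF vi q]) (use fi in \<open>simp only: f_def\<close>)
  then obtain s where s: "s \<in> {1, q-1}" "u!i = (v!i + s) mod q" by blast
  have "u = stp q v i s"
  proof (rule nth_equalityI)
    show "length u = length (stp q v i s)" using lv by (simp add: stp_len)
    fix j assume "j < length u"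
    hence j: "j < n" using lv by simp
    show "u ! j = stp q v i s ! j"
    proof (cases "j = i")
      case True thus ?thesis using s lv j by (simp add: stp_nth)
    next
      case False
      hence "f j = 0" using z j by auto
      hence "min (nat \<bar>int (v!j) - int (u!j)\<bar>) (q - nat \<bar>int (v!j) - int (u!j)\<bar>) = 0"
        by (simp only: f_def)
      hence "v!j = u!j" by (rule term_zero[rotated 2]) (use v u j words_nth in auto)
      thus ?thesis using False lv j by (simp add: stp_nth)
    qed
  qed
  thus ?thesis using i s by blast
qed

lemma core:
  fixes s0 s1 s2 s3 :: int and a b c d :: nat
  assumes "s0 = 1 \<or> s0 = -1" "s1 = 1 \<or> s1 = -1" "s2 = 1 \<or> s2 = -1" "s3 = 1 \<or> s3 = -1"
  and Xa: "let X = (s0) + (if a=b then s1 else 0) + (if a=c then s2 else 0) - (if a=d then s3 else 0) in X = 0 \<or> \<bar>X\<bar> \<ge> 4"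
  and Xb: "let X = (if b=a then s0 else 0) + (s1) + (if b=c then s2 else 0) - (if b=d then s3 else 0) in X = 0 \<or> \<bar>X\<bar> \<ge> 4"
  and Xc: "let X = (if c=a then s0 else 0) + (if c=b then s1 else 0) + (s2) - (if c=d then s3 else 0) in X = 0 \<or> \<bar>X\<bar> \<ge> 4"
  and n1: "\<not> (b = a \<and> s1 = - s0)" and n2: "\<not> (c = b \<and> s2 = - s1)"
  shows "c = a \<and> (b = a \<longleftrightarrow> s2 = s0)"
proof -
  have sg: "s0 = 1 \<or> s0 = -1" "s1 = 1 \<or> s1 = -1" "s2 = 1 \<or> s2 = -1" "s3 = 1 \<or> s3 = -1" using assms by auto
  have ca: "c = a"
  proof (rule ccontr)
    assume ca: "c \<noteq> a"
    show False
    proof (cases "b = a")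
      case True
      hence "s1 = s0" using n1 sg by auto
      thus False using Xa ca True sg by (cases "a = d") (auto simp: Let_def)
    next
      case ba: False
      have da: "d = a \<and> s3 = s0" using Xa ca ba sg by (cases "a = d") (auto simp: Let_def)
      show False
      proof (cases "c = b")
        case True
        hence "s2 = s1" using n2 sg by auto
        thus False using Xc ca ba da True sg by (auto simp: Let_def)
      next
        case False
        thus False using Xc ca ba da sg by (auto simp: Let_def)
      qed
    qed
  qed
  have "b = a \<longleftrightarrow> s2 = s0"
  proof (cases "b = a")
    case True
    hence "s1 = s0" using n1 sg by auto
    moreover have "s2 = s1" using n2 sg ca True by auto
    ultimately show ?thesis using True by simp
  next
    case ba: False
    have db: "d = b" using Xb ca ba sg by (cases "b = d") (auto simp: Let_def)
    have "s2 = - s0" using Xa ca ba db sg by (auto simp: Let_def)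
    thus ?thesis using ba sg by auto
  qed
  thus ?thesis using ca by simp
qed

lemma sg_cases: "sg s = 1 \<or> sg s = -1" by (simp add: sg_def)

lemma dvd_small: assumes "(q::int) \<ge> 4" "q dvd x" shows "x = 0 \<or> \<bar>x\<bar> \<ge> 4"
proof (cases "x = 0")
  case False
  hence "\<bar>q\<bar> \<le> \<bar>x\<bar>" using dvd_imp_le_int assms(2) by blast
  thus ?thesis using assms(1) by simp
qed simp

lemma triple:
  assumes q4: "q \<ge> 4" and w0: "w0 \<in> words q n"
    and ab: "a < n" "b < n" "c < n" "d < n"
    and ss: "s0 \<in> {1, q-1}" "s1 \<in> {1, q-1}" "s2 \<in> {1, q-1}" "s3 \<in> {1, q-1}"
    and e1: "w1 = stp q w0 a s0" and e2: "w2 = stp q w1 b s1" and e3: "w3 = stp q w2 c s2"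
    and e4: "w3 = stp q w0 d s3" and n1: "w2 \<noteq> w0" and n2: "w3 \<noteq> w1"
  shows "c = a \<and> (b = a \<longleftrightarrow> s2 = s0)"
proof -
  have q0: "q > 0" "q > 1" using q4 by auto
  have w1: "w1 \<in> words q n" using e1 stp_words[OF q0(1) w0] by simp
  have w2: "w2 \<in> words q n" using e2 stp_words[OF q0(1) w1] by simp
  have w3: "w3 \<in> words q n" using e3 stp_words[OF q0(1) w2] by simp
  define dl :: "nat \<Rightarrow> nat \<Rightarrow> nat \<Rightarrow> int" where "dl k i s = (if k = i then sg s else 0)" for k i s
  have i1: "int (w1!k) = (int (w0!k) + dl k a s0) mod int q" if "k < n" for k
    using stp_int[OF w0 that ss(1) q0(2)] e1 by (simp add: dl_def)
  have i2: "int (w2!k) = (int (w1!k) + dl k b s1) mod int q" if "k < n" for k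
    using stp_int[OF w1 that ss(2) q0(2)] e2 by (simp add: dl_def)
  have i3: "int (w3!k) = (int (w2!k) + dl k c s2) mod int q" if "k < n" for k
    using stp_int[OF w2 that ss(3) q0(2)] e3 by (simp add: dl_def)
  have i4: "int (w3!k) = (int (w0!k) + dl k d s3) mod int q" if "k < n" for k
    using stp_int[OF w0 that ss(4) q0(2)] e4 by (simp add: dl_def)
  have x0: "int (w0!k) mod int q = int (w0!k)" if "k < n" for k
    using words_nth[OF w0 that] by simp
  have x1: "int (w1!k) mod int q = int (w1!k)" if "k < n" for k
    using words_nth[OF w1 that] by simp
  have j2: "int (w2!k) = (int (w0!k) + dl k a s0 + dl k b s1) mod int q" if "k < n" for k
    using i1[OF that] i2[OF that] by (simp add: mod_add_left_eq)
  have j3: "int (w3!k) = (int (w0!k) + dl k a s0 + dl k b s1 + dl k c s2) mod int q" if "k < n" for k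
    using j2[OF that] i3[OF that] by (simp add: mod_add_left_eq)
  have j3': "int (w3!k) = (int (w1!k) + dl k b s1 + dl k c s2) mod int q" if "k < n" for k
    using i2[OF that] i3[OF that] by (simp add: mod_add_left_eq add.assoc)
  have X: "let X = dl k a s0 + dl k b s1 + dl k c s2 - dl k d s3 in X = 0 \<or> \<bar>X\<bar> \<ge> 4" if "k < n" for k
  proof -
    have "(int (w0!k) + dl k a s0 + dl k b s1 + dl k c s2) mod int q = (int (w0!k) + dl k d s3) mod int q"
      using j3[OF that] i4[OF that] by simp
    hence "int q dvd (int (w0!k) + dl k a s0 + dl k b s1 + dl k c s2) - (int (w0!k) + dl k d s3)"
      by (simp add: mod_eq_dvd_iff)
    hence "int q dvd dl k a s0 + dl k b s1 + dl k c s2 - dl k d s3" by (simp add: algebra_simps)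
    thus ?thesis unfolding Let_def by (rule dvd_small[rotated]) (use q4 in simp)
  qed
  have m1: "\<not> (b = a \<and> sg s1 = - sg s0)"
  proof
    assume h: "b = a \<and> sg s1 = - sg s0"
    have "w2 = w0"
    proof (rule nth_equalityI)
      show "length w2 = length w0" using w2 w0 by (simp add: words_len)
      fix k assume "k < length w2"
      hence k: "k < n" using w2 by (simp add: words_len)
      have "int (w2!k) = int (w0!k)" using j2[OF k] x0[OF k] h by (cases "k = a") (simp_all add: dl_def)
      thus "w2!k = w0!k" by simp
    qed
    thus False using n1 by simp
  qed
  have m2: "\<not> (c = b \<and> sg s2 = - sg s1)"
  proof
    assume h: "c = b \<and> sg s2 = - sg s1"
    have "w3 = w1"
    proof (rule nth_equalityI)
      show "length w3 = length w1" using w3 w1 by (simp add: words_len)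
      fix k assume "k < length w3"
      hence k: "k < n" using w3 by (simp add: words_len)
      have "int (w3!k) = int (w1!k)" using j3'[OF k] x1[OF k] h by (cases "k = b") (simp_all add: dl_def)
      thus "w3!k = w1!k" by simp
    qed
    thus False using n2 by simp
  qed
  have r: "c = a \<and> (b = a \<longleftrightarrow> sg s2 = sg s0)"
  proof (rule core[OF sg_cases sg_cases sg_cases sg_cases _ _ _ m1 m2])
    show "let X = sg s0 + (if a = b then sg s1 else 0) + (if a = c then sg s2 else 0) - (if a = d then sg s3 else 0) in X = 0 \<or> 4 \<le> \<bar>X\<bar>"
      using X[OF ab(1)] unfolding dl_def by simp
    show "let X = (if b = a then sg s0 else 0) + sg s1 + (if b = c then sg s2 else 0) - (if b = d then sg s3 else 0) in X = 0 \<or> 4 \<le> \<bar>X\<bar>"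
      using X[OF ab(2)] unfolding dl_def by simp
    show "let X = (if c = a then sg s0 else 0) + (if c = b then sg s1 else 0) + sg s2 - (if c = d then sg s3 else 0) in X = 0 \<or> 4 \<le> \<bar>X\<bar>"
      using X[OF ab(3)] unfolding dl_def by simp
  qed
  have "sg s2 = sg s0 \<longleftrightarrow> s2 = s0" using ss q4 by (auto simp: sg_def)
  thus ?thesis using r by simp
qed

lemma par_flip:
  assumes h: "(a::nat) mod 2 = (b+1) mod 2" and c: "c = 1 - d" and d: "d \<le> 1"
  shows "(a+c) mod 2 = (b+d) mod 2"
proof (cases "d = 0")
  case True
  have "(a + 1) mod 2 = (a mod 2 + 1) mod 2" by (simp add: mod_Suc_eq)
  also have "\<dots> = ((b+1) mod 2 + 1) mod 2" using h by simp
  also have "\<dots> = (b + 2) mod 2" by (simp add: mod_Suc_eq)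
  also have "\<dots> = b mod 2" by simp
  finally show ?thesis using c True by simp
next
  case False
  hence "d = 1" "c = 0" using c d by auto
  thus ?thesis using h by simp
qed

lemma par_same: "(a::nat) mod 2 = b mod 2 \<Longrightarrow> (a + c) mod 2 = (b + c) mod 2"
  by (metis mod_add_left_eq)

lemma par_two:
  assumes h1: "(x::nat) mod 2 = (y+1) mod 2" and h2: "z mod 2 = (x+1) mod 2"
  shows "z mod 2 = y mod 2"
proof -
  have "z mod 2 = (x mod 2 + 1) mod 2" using h2 by (simp add: mod_Suc_eq)
  also have "\<dots> = ((y+1) mod 2 + 1) mod 2" using h1 by simp
  also have "\<dots> = (y + 2) mod 2" by (simp add: mod_Suc_eq)
  also have "\<dots> = y mod 2" by simp
  finally show ?thesis .
qed

lemma par_ne: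
  assumes h: "(a::nat) mod 2 = b mod 2" and c: "c = 1 - d" and d: "d \<le> 1"
  shows "(a+c) mod 2 \<noteq> (b+d) mod 2"
proof (cases "d = 0")
  case True
  hence "c = 1" using c by simp
  have "(a + 1) mod 2 = (b mod 2 + 1) mod 2" using h by (metis mod_Suc_eq add.commute plus_1_eq_Suc)
  thus ?thesis using True \<open>c = 1\<close> by (simp add: mod_Suc_eq) presburger
next
  case False
  hence "d = 1" "c = 0" using c d by auto
  thus ?thesis using h by simp presburger
qed

lemma alt:
  fixes h :: "int \<Rightarrow> nat list" and M :: int
  assumes q4: "q \<ge> 4" and qe: "even q" and Me: "even M" and M0: "M \<ge> 0"
  and W: "\<And>i. h i \<in> words q n"
  and A: "\<And>i. lee_dist q (h i) (h (i+1)) = 1"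
  and Dst: "\<And>i. h i \<noteq> h (i+2)"
  and Se: "\<And>i. even i \<Longrightarrow> word_add q (h i) (all_ones n) = h (i+M+1)"
  and So: "\<And>i. odd i \<Longrightarrow> word_add q (h i) (all_ones n) = h (i+M-1)"
  shows False
proof -
  have q0: "q > 0" "q > 1" "q \<ge> 3" using q4 by auto
  have "\<forall>i. \<exists>k s. k < n \<and> s \<in> {1,q-1} \<and> h (i+1) = stp q (h i) k s"
    using adj[OF W W q0(3) A] by blast
  then obtain K S where KS: "\<And>i. K i < n" "\<And>i. S i \<in> {1,q-1}" "\<And>i. h (i+1) = stp q (h i) (K i) (S i)"
    by metis
  have T: "\<exists>d s. d < n \<and> s \<in> {1,q-1} \<and> h (j+3) = stp q (h j) d s" if j: "even j" for j
  proof -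
    define i where "i = j - M + 1"
    have io: "odd i" using j Me by (simp add: i_def)
    have ie: "even (i+1)" using io by simp
    have h1: "h j = word_add q (h i) (all_ones n)" using So[OF io] by (simp add: i_def)
    have h2: "h (j+3) = word_add q (h (i+1)) (all_ones n)" using Se[OF ie] by (simp add: i_def algebra_simps)
    have "word_add q (h (i+1)) (all_ones n) = stp q (word_add q (h i) (all_ones n)) (K i) (S i)"
      using KS(3)[of i] add1_stp[OF q0(1) W KS(1)] by simp
    thus ?thesis using h1 h2 KS(1)[of i] KS(2)[of i] by metis
  qed
  have Tr: "K (j+2) = K j \<and> (K (j+1) = K j \<longleftrightarrow> S (j+2) = S j)" if j: "even j" for j
  proof -
    obtain d s where ds: "d < n" "s \<in> {1,q-1}" "h (j+3) = stp q (h j) d s" using T[OF j] by blast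
    have e2: "h (j+2) = stp q (h (j+1)) (K (j+1)) (S (j+1))" using KS(3)[of "j+1"] by (simp add: add.assoc)
    have e3: "h (j+3) = stp q (h (j+2)) (K (j+2)) (S (j+2))" using KS(3)[of "j+2"] by (simp add: add.assoc)
    have n1: "h (j+2) \<noteq> h j" using Dst[of j] by metis
    have n2: "h (j+3) \<noteq> h (j+1)" using Dst[of "j+1"] by (simp add: add.assoc)
    show ?thesis
      by (rule triple[OF q4 W KS(1) KS(1) KS(1) ds(1) KS(2) KS(2) KS(2) ds(2) KS(3) e2 e3 ds(3) n1 n2])
  qed
  define k0 where "k0 = K 0"
  define P where "P j = (h j ! k0 + (if S j = 1 then 0 else 1)) mod 2" for j
  have k0n: "k0 < n" using KS(1) by (simp add: k0_def)
  have Inv: "K (2 * int t) = k0 \<and> P (2 * int t) = P 0" for t :: nat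
  proof (induction t)
    case 0 show ?case by (simp add: k0_def)
  next
    case (Suc t)
    define j where "j = 2 * int t"
    have j: "even j" by (simp add: j_def)
    have Kj: "K j = k0" and Pj: "P j = P 0" using Suc by (simp_all add: j_def)
    have jj: "2 * int (Suc t) = j + 2" by (simp add: j_def)
    have K2: "K (j+2) = k0" and eqv: "K (j+1) = k0 \<longleftrightarrow> S (j+2) = S j" using Tr[OF j] Kj by auto
    have p1: "h (j+1) ! k0 mod 2 = (h j ! k0 + 1) mod 2"
      using stp_par[OF W k0n KS(2) qe q0(2), of j "K j"] KS(3)[of j] Kj by simp
    have p2: "h (j+2) ! k0 mod 2 = (h (j+1) ! k0 + (if k0 = K (j+1) then 1 else 0)) mod 2"
      using stp_par[OF W k0n KS(2) qe q0(2), of "j+1" "K (j+1)"] KS(3)[of "j+1"] by (simp add: add.assoc)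
    have s1: "S j = 1 \<or> S j = q - 1" and s2: "S (j+2) = 1 \<or> S (j+2) = q - 1" using KS(2) by auto
    have qq: "q - 1 \<noteq> 1" using q4 by simp
    have PP: "P (j+2) = P j"
    proof (cases "K (j+1) = k0")
      case True
      hence e: "S (j+2) = S j" using eqv by simp
      have m: "h (j+2) ! k0 mod 2 = h j ! k0 mod 2" using par_two[OF p1] p2 True by simp
      show ?thesis unfolding P_def e by (rule par_same[OF m])
    next
      case False
      hence ne: "S (j+2) \<noteq> S j" using eqv by simp
      have "k0 \<noteq> K (j+1)" using False by metis
      hence hh: "h (j+2) ! k0 mod 2 = (h j ! k0 + 1) mod 2" using p1 p2 by simp
      have "(if S (j+2) = 1 then 0 else 1) = (1::nat) - (if S j = 1 then 0 else 1)"
        using ne s1 s2 qq by auto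
      thus ?thesis unfolding P_def by (rule par_flip[OF hh]) simp
    qed
    show ?case unfolding jj using K2 Pj PP by simp
  qed
  define t where "t = nat (M div 2)"
  have Mt: "M = 2 * int t" using Me M0 unfolding t_def by simp
  have KM: "K M = k0" and PM: "P M = P 0" using Inv[of t] Mt by simp_all
  define x where "x = h 0 ! k0"
  have h1: "h 1 = stp q (h 0) k0 (S 0)" using KS(3)[of 0] by (simp add: k0_def)
  have hM: "h M = word_add q (h 1) (all_ones n)" using So[of 1] by simp
  have hM1: "h (M+1) = word_add q (h 0) (all_ones n)" using Se[of 0] by simp
  have hM1': "h (M+1) = stp q (h M) k0 (S M)" using KS(3)[of M] KM by simp
  have a1: "int (h (M+1) ! k0) = (int x + 1) mod int q" using add1_int[OF W k0n, of 0] hM1 x_def by simp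
  have a2: "int (h (M+1) ! k0) = (int (h M ! k0) + sg (S M)) mod int q"
    using stp_int[OF W k0n KS(2) q0(2), of M k0] hM1' by simp
  have a3: "int (h M ! k0) = (int (h 1 ! k0) + 1) mod int q" using add1_int[OF W k0n, of 1] hM by simp
  have a4: "int (h 1 ! k0) = (int x + sg (S 0)) mod int q"
    using stp_int[OF W k0n KS(2) q0(2), of 0 k0] h1 x_def by simp
  have "int (h (M+1) ! k0) = ((int (h 1 ! k0) + 1) mod int q + sg (S M)) mod int q" using a2 a3 by simp
  also have "\<dots> = (int (h 1 ! k0) + 1 + sg (S M)) mod int q" by (simp add: mod_add_left_eq)
  also have "\<dots> = ((int x + sg (S 0)) mod int q + (1 + sg (S M))) mod int q" using a4 by (simp add: add.assoc)
  also have "\<dots> = (int x + sg (S 0) + (1 + sg (S M))) mod int q" by (simp add: mod_add_left_eq)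
  finally have "(int x + sg (S 0) + (1 + sg (S M))) mod int q = (int x + 1) mod int q" using a1 by simp
  hence "int q dvd (int x + sg (S 0) + (1 + sg (S M))) - (int x + 1)" by (simp add: mod_eq_dvd_iff)
  hence "int q dvd sg (S 0) + sg (S M)" by (simp add: algebra_simps)
  hence "sg (S 0) + sg (S M) = 0 \<or> \<bar>sg (S 0) + sg (S M)\<bar> \<ge> 4" using dvd_small[of "int q"] q4 by simp
  hence "sg (S M) = - sg (S 0)" using sg_cases[of "S 0"] sg_cases[of "S M"] by auto
  hence SMne: "S M \<noteq> S 0" using sg_cases[of "S 0"] by auto
  have pM: "h M ! k0 mod 2 = (h 1 ! k0 + 1) mod 2" using add1_par[OF W k0n qe, of 1] hM by simp
  have p1: "h 1 ! k0 mod 2 = (x + 1) mod 2" using stp_par[OF W k0n KS(2) qe q0(2), of 0 k0] h1 x_def by simp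
  have px: "h M ! k0 mod 2 = x mod 2" by (rule par_two[OF p1 pM])
  have s1: "S 0 = 1 \<or> S 0 = q - 1" and s2: "S M = 1 \<or> S M = q - 1" using KS(2) by auto
  have qq: "q - 1 \<noteq> 1" using q4 by simp
  have "(if S M = 1 then 0 else 1) = (1::nat) - (if S 0 = 1 then 0 else 1)"
    using SMne s1 s2 qq by auto
  hence "P M \<noteq> P 0" unfolding P_def x_def[symmetric] by (rule par_ne[OF px]) simp
  thus False using PM by simp
qed

lemma mod_close:
  fixes N x y :: int
  assumes "N > 2" "x mod N = y mod N" "\<bar>x - y\<bar> \<le> 2"
  shows "x = y"
proof -
  have d: "N dvd x - y" using assms(2) by (simp add: mod_eq_dvd_iff)
  show ?thesis
  proof (rule ccontr)
    assume "x \<noteq> y"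
    hence "\<bar>N\<bar> \<le> \<bar>x - y\<bar>" using dvd_imp_le_int d by simp
    thus False using assms by simp
  qed
qed

lemma const_case:
  fixes g :: "int \<Rightarrow> nat list" and N M e :: int
  assumes q4: "q \<ge> 4" and W: "\<And>i. g i \<in> words q n"
  and inj: "\<And>i j. g i = g j \<Longrightarrow> i mod N = j mod N"
  and NqM: "N = int q * M" and e: "e = 1 \<or> e = -1"
  and Sh: "\<And>i. word_add q (g i) (all_ones n) = g (i + M + e)"
  and qN: "int q < N"
  shows False
proof -
  have it: "\<forall>k<n. g (int m * (M+e)) ! k = (g 0 ! k + m) mod q" for m :: nat
  proof (induction m)
    case 0 show ?case using W[of 0] words_nth by auto
  next
    case (Suc m)
    have "g (int (Suc m) * (M+e)) = g (int m * (M+e) + M + e)" by (simp add: algebra_simps)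
    also have "\<dots> = word_add q (g (int m * (M+e))) (all_ones n)" using Sh by simp
    finally have eq: "g (int (Suc m) * (M+e)) = word_add q (g (int m * (M+e))) (all_ones n)" .
    show ?case
    proof (intro allI impI)
      fix k assume k: "k < n"
      have "g (int (Suc m) * (M+e)) ! k = (g (int m * (M+e)) ! k + 1) mod q"
        using eq add1_nth[OF W k] by simp
      also have "\<dots> = ((g 0 ! k + m) mod q + 1) mod q" using Suc k by simp
      also have "\<dots> = (g 0 ! k + Suc m) mod q" by (simp add: mod_Suc_eq)
      finally show "g (int (Suc m) * (M+e)) ! k = (g 0 ! k + Suc m) mod q" .
    qed
  qed
  have "g (int q * (M+e)) = g 0"
  proof (rule nth_equalityI)
    show "length (g (int q * (M+e))) = length (g 0)" using W words_len by metis
    fix k assume "k < length (g (int q * (M+e)))"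
    hence k: "k < n" using W words_len by metis
    have "g (int q * (M+e)) ! k = (g 0 ! k + q) mod q" using it[of q] k by simp
    also have "\<dots> = g 0 ! k" using W[of 0] words_nth k by simp
    finally show "g (int q * (M+e)) ! k = g 0 ! k" .
  qed
  hence "(int q * (M+e)) mod N = 0 mod N" using inj by blast
  hence "(N + int q * e) mod N = 0" using NqM by (simp add: algebra_simps)
  hence "N dvd int q * e" by (simp add: mod_add_self1 dvd_eq_mod_eq_0)
  hence "N dvd int q" using e by auto
  hence "N \<le> int q" using q4 by (simp add: zdvd_imp_le)
  thus False using qN by simp
qed

theorem theorem4:
  fixes q n :: nat
  assumes "q \<ge> 4" and "even q" and "n \<ge> 3" and "odd n"
  shows "\<not> (\<exists>G :: nat \<Rightarrow> nat list.
            bij_betw G {0..<q^n} (words q n) \<and>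
            (\<forall>i < q^n. lee_dist q (G i) (G ((i + 1) mod q^n)) = 1) \<and>
            (\<forall>i < q^n. \<exists>e :: int \<in> {1, -1}.
               word_add q (G i) (all_ones n)
                 = G (nat ((int i + int (q^(n-1)) + e) mod int (q^n)))))"
proof
  assume "\<exists>G :: nat \<Rightarrow> nat list.
            bij_betw G {0..<q^n} (words q n) \<and>
            (\<forall>i < q^n. lee_dist q (G i) (G ((i + 1) mod q^n)) = 1) \<and>
            (\<forall>i < q^n. \<exists>e :: int \<in> {1, -1}.
               word_add q (G i) (all_ones n)
                 = G (nat ((int i + int (q^(n-1)) + e) mod int (q^n))))"
  then obtain G where bij: "bij_betw G {0..<q^n} (words q n)"
    and adjG: "\<forall>i < q^n. lee_dist q (G i) (G ((i + 1) mod q^n)) = 1"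
    and shG: "\<forall>i < q^n. \<exists>e :: int \<in> {1, -1}.
               word_add q (G i) (all_ones n)
                 = G (nat ((int i + int (q^(n-1)) + e) mod int (q^n)))" by blast
  have q4: "q \<ge> 4" and qe: "even q" using assms by auto
  define N :: int where "N = int (q^n)"
  define M :: int where "M = int (q^(n-1))"
  have qn: "q^n = q * q^(n-1)" using assms(3) by (cases n) auto
  have NqM: "N = int q * M" unfolding N_def M_def using qn by simp
  have q2: "q^2 \<le> q^(n-1)" using assms(3) q4 by (intro power_increasing) auto
  have "4 * 4 \<le> q * q" using q4 by (intro mult_mono) auto
  hence "16 \<le> q^(n-1)" using q2 by (simp add: power2_eq_square)
  hence M16: "M \<ge> 16" unfolding M_def by linarith
  have "int q * 16 \<le> int q * M" using M16 by (intro mult_left_mono) auto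
  hence Mpos: "M > 0" and N64: "N > int q" and Npos: "N > 2" using M16 NqM q4 by linarith+
  define g where "g i = G (nat (i mod N))" for i
  have Nn: "N > 0" using Npos by simp
  have idx: "nat (i mod N) \<in> {0..<q^n}" for i
  proof -
    have "i mod N < N" "0 \<le> i mod N" using Nn by auto
    thus ?thesis unfolding N_def by (auto simp: nat_less_iff)
  qed
  have W: "g i \<in> words q n" for i
    unfolding g_def using bij_betw_apply[OF bij idx] .
  have per: "g (i + N) = g i" for i unfolding g_def by simp
  have inj: "i mod N = j mod N" if "g i = g j" for i j
  proof -
    have "nat (i mod N) = nat (j mod N)"
      using inj_onD[OF bij_betw_imp_inj_on[OF bij] _ idx idx] that unfolding g_def by blast
    moreover have "0 \<le> i mod N" "0 \<le> j mod N" using Nn by auto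
    ultimately show ?thesis by (metis nat_eq_iff2)
  qed
  have A: "lee_dist q (g i) (g (i+1)) = 1" for i
  proof -
    define i' where "i' = nat (i mod N)"
    have i': "i' < q^n" using idx[of i] unfolding i'_def by simp
    have ii: "int i' = i mod N" unfolding i'_def using Nn by simp
    have "int ((i' + 1) mod q^n) = (int i' + 1) mod N" unfolding N_def by (simp add: zmod_int add.commute)
    also have "\<dots> = (i + 1) mod N" unfolding ii by (simp add: mod_add_left_eq)
    finally have "(i' + 1) mod q^n = nat ((i+1) mod N)" by simp
    thus ?thesis using adjG i' unfolding g_def i'_def[symmetric] by metis
  qed
  have Sh: "\<exists>e. (e = 1 \<or> e = -1) \<and> word_add q (g i) (all_ones n) = g (i + M + e)" for i
  proof -
    define i' where "i' = nat (i mod N)"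
    have i': "i' < q^n" using idx[of i] unfolding i'_def by simp
    have ii: "int i' = i mod N" unfolding i'_def using Nn by simp
    obtain e :: int where e: "e \<in> {1,-1}" and
      eq: "word_add q (G i') (all_ones n) = G (nat ((int i' + int (q^(n-1)) + e) mod int (q^n)))"
      using shG i' by blast
    have "(int i' + int (q^(n-1)) + e) mod int (q^n) = (i + M + e) mod N"
      unfolding ii M_def N_def[symmetric] by (simp add: mod_add_left_eq add.assoc)
    hence "word_add q (g i) (all_ones n) = g (i + M + e)" using eq unfolding g_def i'_def by simp
    thus ?thesis using e by blast
  qed
  have "\<exists>E. \<forall>i. (E i = 1 \<or> E i = -1) \<and> word_add q (g i) (all_ones n) = g (i + M + E i)"
    by (rule choice) (use Sh in blast)
  then obtain E where Eb: "\<And>i. E i = 1 \<or> E i = -1"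
    and ES: "\<And>i. word_add q (g i) (all_ones n) = g (i + M + E i)" by blast
  have Dst: "g i \<noteq> g (i+2)" for i
  proof
    assume "g i = g (i+2)"
    hence "i mod N = (i+2) mod N" by (rule inj)
    hence "i = i + 2" by (rule mod_close[OF Npos]) simp
    thus False by simp
  qed
  have R: "E (i+2) = 1" if "E i = 1" for i
  proof (rule ccontr)
    assume "E (i+2) \<noteq> 1"
    hence "E (i+2) = -1" using Eb by metis
    hence "word_add q (g (i+2)) (all_ones n) = word_add q (g i) (all_ones n)"
      using ES[of i] ES[of "i+2"] that by (simp add: algebra_simps)
    hence "g (i+2) = g i" using add1_inj W by blast
    thus False using Dst by metis
  qed
  have EP: "E (i + N) = E i" for i
  proof -
    have "g (i + M + E (i+N)) = g (i + N + M + E (i+N))" using per[of "i + M + E (i+N)"] by (simp add: algebra_simps)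
    also have "\<dots> = word_add q (g (i+N)) (all_ones n)" using ES[of "i+N"] by simp
    also have "\<dots> = g (i + M + E i)" using ES[of i] per[of i] by simp
    finally have "(i + M + E (i+N)) mod N = (i + M + E i) mod N" by (rule inj)
    hence "i + M + E (i+N) = i + M + E i" by (rule mod_close[OF Npos]) (use Eb[of i] Eb[of "i+N"] in auto)
    thus ?thesis by simp
  qed
  have Rk: "E (i + 2 * int k) = 1" if "E i = 1" for i k
  proof (induction k)
    case 0 thus ?case using that by simp
  next
    case (Suc k) thus ?case using R[of "i + 2 * int k"] by (simp add: algebra_simps)
  qed
  have Ne: "even N" unfolding NqM using qe by simp
  have E2: "E (i+2) = E i" for i
  proof (cases "E i = 1")
    case True thus ?thesis using R by simp
  next
    case False
    hence m: "E i = -1" using Eb by metis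
    show ?thesis
    proof (rule ccontr)
      assume "E (i+2) \<noteq> E i"
      hence "E (i+2) = 1" using Eb m by metis
      define k where "k = nat ((N - 2) div 2)"
      have "2 * int k = N - 2" unfolding k_def using Ne Npos by auto
      hence "E (i + N) = 1" using Rk[OF \<open>E (i+2) = 1\<close>, of k] by (simp add: algebra_simps)
      thus False using EP m by simp
    qed
  qed
  have E2k: "E (i + 2 * int k) = E i" for i k
    by (induction k) (simp_all add: E2[of "i + 2 * int _", simplified algebra_simps] algebra_simps)
  have Epar: "E i = (if even i then E 0 else E 1)" for i
  proof -
    have ii: "i = i mod 2 + 2 * (i div 2)" by simp
    have "E i = E (i mod 2)"
    proof (cases "i div 2 \<ge> 0")
      case True
      hence "E (i mod 2 + 2 * int (nat (i div 2))) = E (i mod 2)" using E2k by blast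
      thus ?thesis using True ii by simp
    next
      case False
      hence "E (i + 2 * int (nat (- (i div 2)))) = E i" using E2k by blast
      thus ?thesis using False by (metis ii add.commute add_diff_cancel_left' int_nat_eq less_le_not_le linorder_le_less_linear minus_mult_right neg_0_le_iff_le uminus_add_conv_diff)
    qed
    thus ?thesis by (cases "even i") (simp_all add: even_iff_mod_2_eq_zero odd_iff_mod_2_eq_one)
  qed
  have Me: "even M" unfolding M_def using qe assms(3) by (cases "n - 1") auto
  have M0: "M \<ge> 0" using Mpos by simp
  have E0: "E 0 = 1 \<or> E 0 = -1" and E1: "E 1 = 1 \<or> E 1 = -1" using Eb by auto
  show False
  proof (cases "E 0 = E 1")
    case True
    have sh: "word_add q (g i) (all_ones n) = g (i + M + E 0)" for i
      using ES[of i] Epar[of i] True by (cases "even i") simp_all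
    show False by (rule const_case[where g=g and N=N and M=M and e="E 0" and q=q and n=n, OF q4 W inj NqM E0 sh N64])
  next
    case ne: False
    show False
    proof (cases "E 0 = 1")
      case True
      hence e1: "E 1 = -1" using ne E1 by simp
      show False
      proof (rule alt[OF q4 qe Me M0 W A Dst])
        fix i :: int assume "even i"
        thus "word_add q (g i) (all_ones n) = g (i + M + 1)" using ES[of i] Epar[of i] True by simp
      next
        fix i :: int assume "odd i"
        thus "word_add q (g i) (all_ones n) = g (i + M - 1)" using ES[of i] Epar[of i] e1 by simp
      qed
    next
      case False
      hence e0: "E 0 = -1" using E0 by simp
      hence e1: "E 1 = 1" using ne E1 by simp
      show False
      proof (rule alt[where h="\<lambda>i. g (i+1)" and q=q and n=n and M=M, OF q4 qe Me M0])
        show "g (i+1) \<in> words q n" for i by (rule W)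
        show "lee_dist q (g (i+1)) (g (i+1+1)) = 1" for i by (rule A)
        show "g (i+1) \<noteq> g (i+2+1)" for i using Dst[of "i+1"] by (simp add: algebra_simps)
      next
        fix i :: int assume "even i"
        thus "word_add q (g (i+1)) (all_ones n) = g (i + M + 1 + 1)" using ES[of "i+1"] Epar[of "i+1"] e1
          by (simp add: algebra_simps)
      next
        fix i :: int assume "odd i"
        thus "word_add q (g (i+1)) (all_ones n) = g (i + M - 1 + 1)" using ES[of "i+1"] Epar[of "i+1"] e0
          by (simp add: algebra_simps)
      qed
    qed
  qed
qed


end
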